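(* Let $X$ be a real normed space, $f:X\to\mathbb R\cup\{+\infty\}$ proper, $\bar x\in(\partial f)^{-1}(0)$, and $p,q\in(1,\infty)$ with $p^{-1}+q^{-1}=1$. (i) Suppose there exist $\beta\in(0,+\infty]$, $\kappa\in(0,+\infty)$ and a dense subset $\mathcal W$ of $\mathbb B_*(0,\beta)$ such that for every $\xi\in\mathcal W$ there is $x\in X$ with $\xi\in\partial f(x)$ and $\|x-\bar x\|\le\kappa\|\xi\|^{q/p}$. Then for every $\delta\in(0,+\infty)$, $$f(x)\ge f(\bar x)+\frac12\min\Big\{\frac{\beta}{\delta^{p/q}},\frac{1}{(2\kappa)^{p/q}}\Big\}\|x-\bar x\|^p\quad\text{for all }x\in\mathbb B(\bar x,\delta).$$ (ii) Suppose $\partial f$ is strongly $\frac qp$-subregular at $\bar x$ with parameters $\alpha\in(0,+\infty]$ and $\kappa\in(0,+\infty)$. Then $$f(x)\ge f(\bar x)+\frac{1}{2(2\kappa)^{p/q}}\|x-\bar x\|^p\quad\text{for all }x\in\bar x+2\kappa\,J_p^{-1}\Big(\overline{\partial f(\mathbb B(\bar x,\alpha))}\Big).$$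
   Context: $\partial f(x):=\{\xi\in X^*: x\text{ is a global minimizer of } f-\langle\xi,\cdot\rangle\}$ (Fenchel–Moreau subdifferential, $f$ possibly nonconvex); $(\partial f)^{-1}(0)=\{x:0\in\partial f(x)\}$; $\partial f(A)=\bigcup_{x\in A}\partial f(x)$. $\mathbb B(x,r)$ and $\mathbb B_*(\xi,r)$ are closed balls in $X$ and $X^*$, with $\mathbb B(x,+\infty)=X$. Duality mapping: $J_p(x):=\{\xi\in X^*:\langle\xi,x\rangle=\|\xi\|\|x\|,\ \|\xi\|=\|x\|^{p-1}\}$, and $J_p^{-1}(A):=\{x: J_p(x)\cap A\ne\emptyset\}$. A set-valued map $\mathcal F:X\rightrightarrows Y$ is strongly $\lambda$-subregular at $\bar x\in\mathcal F^{-1}(0)$ with parameters $\alpha\in(0,+\infty]$, $\kappa\in(0,+\infty)$ if $\|x-\bar x\|\le\kappa\, d(0,\mathcal F(x))^\lambda$ for all $x\in\mathbb B(\bar x,\alpha)$, where $d(0,\mathcal F(x))=\inf\{\|y\|:y\in\mathcal F(x)\}$ ($=+\infty$ if $\mathcal F(x)=\emptyset$). *)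

theory Defs
  imports "HOL-Analysis.Analysis" "HOL-Library.Extended_Real"
begin

definition subdiff :: "('a::real_normed_vector \<Rightarrow> ereal) \<Rightarrow> 'a \<Rightarrow> ('a \<Rightarrow>\<^sub>L real) set" where
  "subdiff f x = {\<xi>. \<forall>y. f x - ereal (blinfun_apply \<xi> x) \<le> f y - ereal (blinfun_apply \<xi> y)}"

definition proper_fun :: "('a \<Rightarrow> ereal) \<Rightarrow> bool" where
  "proper_fun f \<longleftrightarrow> (\<forall>x. f x \<noteq> -\<infinity>) \<and> (\<exists>x. f x \<noteq> \<infinity>)"

text \<open>Closed ball with possibly infinite radius (radius \<infinity> gives the whole space).\<close>
definition ecball :: "'a::real_normed_vector \<Rightarrow> ereal \<Rightarrow> 'a set" where
  "ecball c r = {x. ereal (norm (x - c)) \<le> r}"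

definition dual_map :: "real \<Rightarrow> 'a::real_normed_vector \<Rightarrow> ('a \<Rightarrow>\<^sub>L real) set" where
  "dual_map p x = {\<xi>. blinfun_apply \<xi> x = norm \<xi> * norm x \<and> norm \<xi> = norm x powr (p - 1)}"

definition dual_map_inv :: "real \<Rightarrow> ('a::real_normed_vector \<Rightarrow>\<^sub>L real) set \<Rightarrow> 'a set" where
  "dual_map_inv p A = {x. dual_map p x \<inter> A \<noteq> {}}"

text \<open>d(0, F x) = inf of norms, +\<infinity> if F x is empty.\<close>
definition dist0 :: "('a \<Rightarrow> 'b::real_normed_vector set) \<Rightarrow> 'a \<Rightarrow> ereal" where
  "dist0 F x = (INF y\<in>F x. ereal (norm y))"

definition epowr :: "ereal \<Rightarrow> real \<Rightarrow> ereal" where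
  "epowr d l = (case d of ereal r \<Rightarrow> ereal (r powr l) | PInfty \<Rightarrow> \<infinity> | MInfty \<Rightarrow> 0)"

definition strongly_subregular ::
  "('a::real_normed_vector \<Rightarrow> 'b::real_normed_vector set) \<Rightarrow> 'a \<Rightarrow> real \<Rightarrow> ereal \<Rightarrow> real \<Rightarrow> bool" where
  "strongly_subregular F xbar l \<alpha> \<kappa> \<longleftrightarrow>
     0 \<in> F xbar \<and> \<alpha> > 0 \<and> \<kappa> > 0 \<and>
     (\<forall>x\<in>ecball xbar \<alpha>. ereal (norm (x - xbar)) \<le> ereal \<kappa> * epowr (dist0 F x) l)"

end

theory Submission
  imports Defs
begin


definition good :: "'a::real_normed_vector \<Rightarrow> ('a \<times> real) set \<Rightarrow> bool" where
 "good h G \<longleftrightarrow> (\<forall>x a b. (x,a)\<in>G \<longrightarrow> (x,b)\<in>G \<longrightarrow> a=b)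
   \<and> (\<forall>x a y b. (x,a)\<in>G \<longrightarrow> (y,b)\<in>G \<longrightarrow> (x+y,a+b)\<in>G)
   \<and> (\<forall>x a c. (x,a)\<in>G \<longrightarrow> (c *\<^sub>R x, c*a)\<in>G)
   \<and> (\<forall>x a. (x,a)\<in>G \<longrightarrow> a \<le> norm x) \<and> (h, norm h)\<in>G"

lemma good_base: "good h {(c *\<^sub>R h, c * norm h) | c. True}"
proof -
  have f: "a = b" if "c *\<^sub>R h = d *\<^sub>R h" "a = c * norm h" "b = d * norm h" for a b c d
  proof (cases "h = 0")
    case True then show ?thesis using that by simp
  next
    case False
    then have "c = d" using that(1) by (metis scaleR_cancel_right)
    then show ?thesis using that by simp
  qed
  show ?thesis unfolding good_def
    apply (intro conjI)
    subgoal using f by blast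
    subgoal by clarsimp (metis scaleR_add_left distrib_right)
    subgoal by clarsimp (metis scaleR_scaleR mult.assoc)
    subgoal by (auto, metis abs_ge_self mult_right_mono norm_ge_zero norm_scaleR real_norm_def)
    subgoal by (auto intro!: exI[of _ 1])
    done
qed

lemma good_chain:
  assumes "C \<noteq> {}" "subset.chain {G. good h G} C"
  shows "good h (\<Union>C)"
proof -
  have ch: "\<And>X Y. X \<in> C \<Longrightarrow> Y \<in> C \<Longrightarrow> X \<subseteq> Y \<or> Y \<subseteq> X" and g: "\<And>X. X \<in> C \<Longrightarrow> good h X"
    using assms(2) unfolding subset_chain_def by auto
  have two: "\<exists>G\<in>C. (x,a)\<in>G \<and> (y,b)\<in>G" if A: "(x,a)\<in>\<Union>C" "(y,b)\<in>\<Union>C" for x a y b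
  proof -
    obtain X where "X\<in>C" "(x,a)\<in>X" using A(1) by (rule UnionE)
    moreover obtain Y where "Y\<in>C" "(y,b)\<in>Y" using A(2) by (rule UnionE)
    ultimately show ?thesis using ch[of X Y] by blast
  qed
  obtain G0 where "G0 \<in> C" using assms(1) by auto
  have "(x,a)\<in>\<Union>C \<Longrightarrow> (x,b)\<in>\<Union>C \<Longrightarrow> a=b" for x a b
  proof -
    assume "(x,a)\<in>\<Union>C" "(x,b)\<in>\<Union>C"
    then obtain G where "G\<in>C" "(x,a)\<in>G" "(x,b)\<in>G" using two by blast
    then show "a = b" using g[of G] unfolding good_def by blast
  qed
  moreover have "(x,a)\<in>\<Union>C \<Longrightarrow> (y,b)\<in>\<Union>C \<Longrightarrow> (x+y,a+b)\<in>\<Union>C" for x a y b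
  proof -
    assume "(x,a)\<in>\<Union>C" "(y,b)\<in>\<Union>C"
    then obtain G where "G\<in>C" "(x,a)\<in>G" "(y,b)\<in>G" using two by blast
    then show ?thesis using g[of G] unfolding good_def by blast
  qed
  moreover have "(x,a)\<in>\<Union>C \<Longrightarrow> (c *\<^sub>R x, c*a)\<in>\<Union>C" for x a c
  proof -
    assume "(x,a)\<in>\<Union>C"
    then obtain G where "G\<in>C" "(x,a)\<in>G" by blast
    then show ?thesis using g[of G] unfolding good_def by blast
  qed
  moreover have "(x,a)\<in>\<Union>C \<Longrightarrow> a \<le> norm x" for x a
  proof -
    assume "(x,a)\<in>\<Union>C"
    then obtain G where "G\<in>C" "(x,a)\<in>G" by blast
    then show ?thesis using g[of G] unfolding good_def by blast
  qed
  moreover have "(h, norm h) \<in> \<Union>C" using g[of G0] \<open>G0 \<in> C\<close> unfolding good_def by blast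
  ultimately show ?thesis unfolding good_def by blast
qed

lemma aux1: "(c::real) > 0 \<Longrightarrow> c * (norm (w::'a::real_normed_vector) - inverse c * v) = norm (c *\<^sub>R w) - v"
  by (simp add: right_diff_distrib)
lemma aux2: "(d::real) > 0 \<Longrightarrow> d * (inverse d * v - norm (w::'a::real_normed_vector)) = v - norm (d *\<^sub>R w)"
  by (simp add: right_diff_distrib)

lemma good_extend:
  assumes G: "good h G" and y: "y \<notin> fst ` G"
  shows "\<exists>G'. good h G' \<and> G \<subseteq> G' \<and> G' \<noteq> G"
proof -
  have fnc: "\<And>x a b. (x,a)\<in>G \<Longrightarrow> (x,b)\<in>G \<Longrightarrow> a=b"
   and add: "\<And>x a z b. (x,a)\<in>G \<Longrightarrow> (z,b)\<in>G \<Longrightarrow> (x+z,a+b)\<in>G"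
   and sc: "\<And>x a c. (x,a)\<in>G \<Longrightarrow> (c *\<^sub>R x, c*a)\<in>G"
   and bd: "\<And>x a. (x,a)\<in>G \<Longrightarrow> a \<le> norm x"
   and hG: "(h, norm h)\<in>G" using G unfolding good_def by blast+
  define L where "L = {v - norm (x - y) | x v. (x,v)\<in>G}"
  define U where "U = {norm (x + y) - v | x v. (x,v)\<in>G}"
  have LU: "l \<le> u" if A: "l \<in> L" "u \<in> U" for l u
  proof -
    obtain x1 v1 x2 v2 where 1: "(x1,v1)\<in>G" "l = v1 - norm (x1 - y)" and 2: "(x2,v2)\<in>G" "u = norm (x2 + y) - v2"
      using A unfolding L_def U_def by blast
    have "v1 + v2 \<le> norm (x1 + x2)" using bd[OF add[OF 1(1) 2(1)]] .
    also have "\<dots> \<le> norm (x1 - y) + norm (x2 + y)"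
      using norm_triangle_ineq[of "x1 - y" "x2 + y"] by simp
    finally show ?thesis using 1 2 by simp
  qed
  have Lne: "L \<noteq> {}" using hG unfolding L_def by auto
  have Une: "U \<noteq> {}" using hG unfolding U_def by auto
  define a where "a = Sup L"
  have bddL: "bdd_above L" using LU Une by (meson bdd_aboveI equals0I)
  have aL: "\<And>l. l \<in> L \<Longrightarrow> l \<le> a" unfolding a_def using bddL by (simp add: cSup_upper)
  have aU: "\<And>u. u \<in> U \<Longrightarrow> a \<le> u" unfolding a_def using Lne LU by (meson cSup_least)
  define G' where "G' = {(x + c *\<^sub>R y, v + c * a) | x v c. (x,v)\<in>G}"
  have dom: "x \<in> fst ` G" if "(x,v)\<in>G" for x v using that by force
  have "good h G'"
    unfolding good_def
  proof (intro conjI allI impI)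
    fix z b1 b2 assume "(z,b1)\<in>G'" "(z,b2)\<in>G'"
    then obtain x1 v1 c1 x2 v2 c2 where 1: "(x1,v1)\<in>G" "z = x1 + c1 *\<^sub>R y" "b1 = v1 + c1 * a"
      and 2: "(x2,v2)\<in>G" "z = x2 + c2 *\<^sub>R y" "b2 = v2 + c2 * a" unfolding G'_def by blast
    have "c1 = c2"
    proof (rule ccontr)
      assume ne: "c1 \<noteq> c2"
      have "(x2 + (-1) *\<^sub>R x1, v2 + (-1) * v1) \<in> G" using add[OF 2(1) sc[OF 1(1)]] .
      moreover have "x2 + (-1) *\<^sub>R x1 = (c1 - c2) *\<^sub>R y" using 1(2) 2(2) by (simp add: algebra_simps)
      ultimately have "((1/(c1-c2)) *\<^sub>R ((c1 - c2) *\<^sub>R y), (1/(c1-c2)) * (v2 + (-1) * v1)) \<in> G"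
        using sc by metis
      then have "(y, (1/(c1-c2)) * (v2 + (-1) * v1)) \<in> G" using ne by simp
      then show False using y dom by blast
    qed
    then have "x1 = x2" using 1(2) 2(2) by simp
    then show "b1 = b2" using fnc 1 2 \<open>c1 = c2\<close> by metis
  next
    fix z1 b1 z2 b2 assume "(z1,b1)\<in>G'" "(z2,b2)\<in>G'"
    then obtain x1 v1 c1 x2 v2 c2 where 1: "(x1,v1)\<in>G" "z1 = x1 + c1 *\<^sub>R y" "b1 = v1 + c1 * a"
      and 2: "(x2,v2)\<in>G" "z2 = x2 + c2 *\<^sub>R y" "b2 = v2 + c2 * a" unfolding G'_def by blast
    have "z1 + z2 = (x1 + x2) + (c1 + c2) *\<^sub>R y" "b1 + b2 = (v1 + v2) + (c1 + c2) * a"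
      using 1 2 by (simp_all add: algebra_simps)
    then show "(z1 + z2, b1 + b2) \<in> G'" unfolding G'_def using add[OF 1(1) 2(1)] by blast
  next
    fix z b d assume "(z,b)\<in>G'"
    then obtain x v c where 1: "(x,v)\<in>G" "z = x + c *\<^sub>R y" "b = v + c * a" unfolding G'_def by blast
    have "d *\<^sub>R z = d *\<^sub>R x + (d * c) *\<^sub>R y" "d * b = d * v + (d * c) * a" using 1 by (simp_all add: algebra_simps)
    then show "(d *\<^sub>R z, d * b) \<in> G'" unfolding G'_def using sc[OF 1(1)] by blast
  next
    fix z b assume "(z,b)\<in>G'"
    then obtain x v c where 1: "(x,v)\<in>G" "z = x + c *\<^sub>R y" "b = v + c * a" unfolding G'_def by blast
    show "b \<le> norm z"
    proof (cases c "0::real" rule: linorder_cases)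
      case equal then show ?thesis using 1 bd by simp
    next
      case greater
      have "(inverse c *\<^sub>R x, inverse c * v) \<in> G" using sc 1(1) by blast
      then have "norm (inverse c *\<^sub>R x + y) - inverse c * v \<in> U" unfolding U_def by blast
      then have "a \<le> norm (inverse c *\<^sub>R x + y) - inverse c * v" using aU by blast
      then have "c * a \<le> c * (norm (inverse c *\<^sub>R x + y) - inverse c * v)" using greater by simp
      also have "\<dots> = norm (c *\<^sub>R (inverse c *\<^sub>R x + y)) - v" by (rule aux1[OF greater])
      also have "c *\<^sub>R (inverse c *\<^sub>R x + y) = z" using greater 1(2) by (simp add: algebra_simps)
      finally show ?thesis using 1 by simp
    next
      case less
      define d where "d = - c"
      have d: "d > 0" using less d_def by simp
      have "(inverse d *\<^sub>R x, inverse d * v) \<in> G" using sc 1(1) by blast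
      then have "inverse d * v - norm (inverse d *\<^sub>R x - y) \<in> L" unfolding L_def by blast
      then have "inverse d * v - norm (inverse d *\<^sub>R x - y) \<le> a" using aL by blast
      then have "d * (inverse d * v - norm (inverse d *\<^sub>R x - y)) \<le> d * a" using d by simp
      then have "v - norm (d *\<^sub>R (inverse d *\<^sub>R x - y)) \<le> d * a" by (simp only: aux2[OF d])
      moreover have "d *\<^sub>R (inverse d *\<^sub>R x - y) = z" using d 1(2) d_def by (simp add: algebra_simps)
      ultimately have e: "v - norm z \<le> d * a" by simp
      have "d * a = -(c * a)" using d_def by simp
      then show ?thesis using e 1(3) by linarith
    qed
  next
    show "(h, norm h) \<in> G'" unfolding G'_def using hG by force
  qed
  moreover have "G \<subseteq> G'" unfolding G'_def by force
  moreover have "(y, a) \<in> G'" proof -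
    have "(0::'a, 0::real) \<in> G" using sc[OF hG, of 0] by simp
    then show ?thesis unfolding G'_def by force
  qed
  then have "G' \<noteq> G" using y dom by blast
  ultimately show ?thesis by blast
qed

lemma norming_functional:
  fixes h :: "'a::real_normed_vector"
  shows "\<exists>g::'a \<Rightarrow>\<^sub>L real. norm g \<le> 1 \<and> blinfun_apply g h = norm h"
proof -
  have "\<exists>M\<in>{G. good h G}. \<forall>X\<in>{G. good h G}. M \<subseteq> X \<longrightarrow> X = M"
    apply (rule subset_Zorn_nonempty)
    using good_base good_chain by blast+
  then obtain M where M: "good h M" and max: "\<And>X. good h X \<Longrightarrow> M \<subseteq> X \<Longrightarrow> X = M" by auto
  have all: "x \<in> fst ` M" for x
    using good_extend[OF M, of x] max by blast
  have fnc: "\<And>x a b. (x,a)\<in>M \<Longrightarrow> (x,b)\<in>M \<Longrightarrow> a=b"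
   and add: "\<And>x a z b. (x,a)\<in>M \<Longrightarrow> (z,b)\<in>M \<Longrightarrow> (x+z,a+b)\<in>M"
   and sc: "\<And>x a c. (x,a)\<in>M \<Longrightarrow> (c *\<^sub>R x, c*a)\<in>M"
   and bd: "\<And>x a. (x,a)\<in>M \<Longrightarrow> a \<le> norm x"
   and hM: "(h, norm h)\<in>M" using M unfolding good_def by blast+
  define g where "g x = (THE v. (x,v) \<in> M)" for x
  have gM: "(x, g x) \<in> M" for x
  proof -
    obtain v where "(x,v)\<in>M" using all[of x] by force
    have "(THE v. (x,v)\<in>M) = v" by (rule the_equality) (use fnc \<open>(x,v)\<in>M\<close> in blast)+
    then show ?thesis unfolding g_def using \<open>(x,v)\<in>M\<close> by simp
  qed
  have geq: "(x,v)\<in>M \<Longrightarrow> g x = v" for x v using fnc gM by blast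
  have lin: "linear g"
  proof
    show "g (x + z) = g x + g z" for x z using geq[OF add[OF gM gM]] .
    show "g (c *\<^sub>R x) = c *\<^sub>R g x" for c x using geq[OF sc[OF gM]] by simp
  qed
  have gb: "\<bar>g x\<bar> \<le> norm x" for x
  proof -
    have "g x \<le> norm x" using bd[OF gM] .
    moreover have "- g x \<le> norm x" using bd[OF sc[OF gM[of x], of "-1"]] by simp
    ultimately show ?thesis by simp
  qed
  have bl: "bounded_linear g"
  proof (rule bounded_linear_intro[where K=1])
    show "g (x+y) = g x + g y" for x y using lin by (rule linear_add)
    show "g (r *\<^sub>R x) = r *\<^sub>R g x" for r x using lin by (rule linear_scale)
    show "norm (g x) \<le> norm x * 1" for x using gb[of x] by simp
  qed
  show ?thesis
  proof (intro exI conjI)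
    show "norm (Blinfun g) \<le> 1"
      using bl gb by (auto intro!: norm_blinfun_bound simp: bounded_linear_Blinfun_apply)
    show "blinfun_apply (Blinfun g) h = norm h" using bl geq[OF hM] by (simp add: bounded_linear_Blinfun_apply)
  qed
qed


lemma sub0_le:
  assumes "0 \<in> subdiff f xbar" shows "f xbar \<le> f y"
  using assms unfolding subdiff_def by simp

lemma fxbar_fin:
  assumes "proper_fun f" "0 \<in> subdiff f xbar" shows "\<exists>m. f xbar = ereal m"
proof -
  obtain z where "f z \<noteq> \<infinity>" using assms(1) unfolding proper_fun_def by blast
  moreover have "f xbar \<le> f z" using sub0_le[OF assms(2)] .
  ultimately have "f xbar \<noteq> \<infinity>" by auto
  moreover have "f xbar \<noteq> -\<infinity>" using assms(1) unfolding proper_fun_def by blast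
  ultimately show ?thesis by (cases "f xbar") auto
qed

lemma npow_mult:
  assumes "(N::real) \<ge> 0" "e = q - 1" "q > 1"
  shows "N * N powr e = N powr q"
proof (cases "N = 0")
  case True then show ?thesis using assms by simp
next
  case False
  have "N powr (1 + e) = N powr 1 * N powr e" by (rule powr_add)
  also have "N powr 1 = N" using assms(1) False by simp
  finally show ?thesis using assms by simp
qed

lemma key:
  fixes f :: "'a::real_normed_vector \<Rightarrow> ereal"
  assumes "proper_fun f" "0 \<in> subdiff f xbar" "\<eta> \<in> subdiff f y"
    and yb: "norm (y - xbar) \<le> \<kappa> * norm \<eta> powr (q/p)"
    and fx: "f x = ereal a" and fm: "f xbar = ereal m" and qp: "q/p = q - 1" and q: "q > 1" and k: "\<kappa> \<ge> 0"
  shows "m + blinfun_apply \<eta> (x - xbar) - \<kappa> * norm \<eta> powr q \<le> a"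
proof -
  have "f y - ereal (blinfun_apply \<eta> y) \<le> f x - ereal (blinfun_apply \<eta> x)"
    using assms(3) unfolding subdiff_def by blast
  then have 1: "f y - ereal (blinfun_apply \<eta> y) \<le> ereal (a - blinfun_apply \<eta> x)"
    using fx by simp
  have "f y \<noteq> -\<infinity>" using assms(1) unfolding proper_fun_def by blast
  with 1 obtain b where fb: "f y = ereal b" by (cases "f y") auto
  with 1 have 2: "b - blinfun_apply \<eta> y \<le> a - blinfun_apply \<eta> x" by simp
  have "f xbar \<le> f y" using sub0_le[OF assms(2)] .
  then have 3: "m \<le> b" using fb fm by simp
  have "blinfun_apply \<eta> (y - xbar) \<le> norm (blinfun_apply \<eta> (y - xbar))" by simp
  also have "\<dots> \<le> norm \<eta> * norm (y - xbar)" by (rule norm_blinfun)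
  also have "\<dots> \<le> norm \<eta> * (\<kappa> * norm \<eta> powr (q/p))" by (rule mult_left_mono[OF yb]) simp
  also have "\<dots> = \<kappa> * (norm \<eta> * norm \<eta> powr (q/p))" by simp
  also have "norm \<eta> * norm \<eta> powr (q/p) = norm \<eta> powr q" using npow_mult[OF _ qp q] by simp
  finally have 4: "blinfun_apply \<eta> (y - xbar) \<le> \<kappa> * norm \<eta> powr q" .
  have "blinfun_apply \<eta> (x - xbar) = blinfun_apply \<eta> x - blinfun_apply \<eta> xbar"
       "blinfun_apply \<eta> (y - xbar) = blinfun_apply \<eta> y - blinfun_apply \<eta> xbar"
    by (simp_all add: blinfun.diff_right)
  then show ?thesis using 2 3 4 by linarith
qed

lemma closed_S:
  assumes "q > 0"
  shows "closed {\<xi>::'a::real_normed_vector \<Rightarrow>\<^sub>L real. m + blinfun_apply \<xi> h - \<kappa> * norm \<xi> powr q \<le> a}"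
proof (rule closed_Collect_le)
  have bl: "bounded_linear (\<lambda>\<xi>::'a \<Rightarrow>\<^sub>L real. blinfun_apply \<xi> h)"
    by (rule bounded_bilinear.bounded_linear_left[OF bounded_bilinear_blinfun_apply])
  have c1: "continuous_on UNIV (\<lambda>\<xi>::'a \<Rightarrow>\<^sub>L real. blinfun_apply \<xi> h)"
    using bl by (simp add: linear_continuous_on)
  have c2: "continuous_on UNIV (\<lambda>\<xi>::'a \<Rightarrow>\<^sub>L real. norm \<xi> powr q)"
    by (rule continuous_on_powr') (use assms in \<open>auto intro!: continuous_intros\<close>)
  show "continuous_on UNIV (\<lambda>\<xi>::'a \<Rightarrow>\<^sub>L real. m + blinfun_apply \<xi> h - \<kappa> * norm \<xi> powr q)"
    by (intro continuous_on_diff continuous_on_add continuous_on_const continuous_on_mult c1 c2)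
qed (simp add: continuous_on_const)

lemma conj_facts:
  fixes p q :: real
  assumes "p > 1" "q > 1" "1/p + 1/q = 1"
  shows "p/q = p - 1" "q/p = q - 1" "p * q = p + q"
proof -
  have pq: "p * q = p + q" using assms by (simp add: field_simps)
  then show "p * q = p + q" .
  show "p/q = p - 1" using pq assms by (simp add: field_simps)
  show "q/p = q - 1" using pq assms by (simp add: field_simps)
qed

lemma arith_i:
  fixes r \<delta> \<kappa> p q D :: real and \<beta> :: ereal
  assumes r0: "0 \<le> r" and rd: "r \<le> \<delta>" and d0: "\<delta> > 0" and k0: "\<kappa> > 0" and p1: "p > 1" and q1: "q > 1"
    and conj: "1/p + 1/q = 1" and b0: "\<beta> > 0"
    and H: "\<And>t. 0 \<le> t \<Longrightarrow> ereal t \<le> \<beta> \<Longrightarrow> t * r - \<kappa> * t powr q \<le> D"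
  shows "1 / 2 * (case \<beta> of ereal b \<Rightarrow> min (b / \<delta> powr (p / q)) (1 / (2 * \<kappa>) powr (p / q))
                           | _ \<Rightarrow> 1 / (2 * \<kappa>) powr (p / q)) * r powr p \<le> D"
proof -
  note cf = conj_facts[OF p1 q1 conj]
  define C where "C = (case \<beta> of ereal b \<Rightarrow> min (b / \<delta> powr (p / q)) (1 / (2 * \<kappa>) powr (p / q))
                           | _ \<Rightarrow> 1 / (2 * \<kappa>) powr (p / q))"
  have C1: "C \<le> 1 / (2 * \<kappa>) powr (p / q)" unfolding C_def by (cases \<beta>) auto
  have C2: "\<beta> = ereal b \<Longrightarrow> C \<le> b / \<delta> powr (p / q)" for b unfolding C_def by auto
  have rp0: "r powr p \<ge> 0" by simp
  have "1 / 2 * C * r powr p \<le> D"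
  proof (cases "r = 0")
    case True
    have "0 * r - \<kappa> * 0 powr q \<le> D" using H[of 0] b0 by (simp add: zero_ereal_def)
    then show ?thesis using True p1 q1 by simp
  next
    case False
    then have r: "r > 0" using r0 by simp
    define s where "s = r / (2 * \<kappa>)"
    have s0: "s > 0" using r k0 s_def by simp
    have rs: "r = 2 * \<kappa> * s" using k0 s_def by simp
    define t1 where "t1 = s powr (p / q)"
    have t10: "t1 > 0" using s0 t1_def by simp
    have t1q: "t1 powr q = s powr p" unfolding t1_def using s0 q1 by (simp add: powr_powr)
    have spq: "s powr (p/q) * s = s powr p"
    proof -
      have "s powr (p/q) * s = s powr (p/q) * s powr 1" using s0 by simp
      also have "\<dots> = s powr (p/q + 1)" using s0 by (simp add: powr_add)
      finally show ?thesis using cf by simp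
    qed
    have kp: "(2 * \<kappa>) powr p = (2 * \<kappa>) powr (p/q) * (2 * \<kappa>)"
    proof -
      have "(2 * \<kappa>) powr (p/q) * (2 * \<kappa>) = (2 * \<kappa>) powr (p/q) * (2 * \<kappa>) powr 1" using k0 by simp
      also have "\<dots> = (2 * \<kappa>) powr (p/q + 1)" using k0 by (simp add: powr_add)
      finally show ?thesis using cf by simp
    qed
    have rp: "r powr p = (2 * \<kappa>) powr p * s powr p" unfolding rs using k0 s0 by (simp add: powr_mult)
    have kpos: "(2 * \<kappa>) powr (p/q) > 0" using k0 by simp
    show ?thesis
    proof (cases "ereal t1 \<le> \<beta>")
      case True
      have "t1 * r - \<kappa> * t1 powr q \<le> D" using H[OF _ True] t10 by simp
      moreover have "t1 * r - \<kappa> * t1 powr q = \<kappa> * s powr p"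
      proof -
        have "t1 * r = 2 * \<kappa> * (s powr (p/q) * s)" unfolding t1_def rs by (simp add: algebra_simps)
        then have "t1 * r = 2 * \<kappa> * s powr p" using spq by simp
        then show ?thesis using t1q by simp
      qed
      moreover have "1 / 2 * (1 / (2 * \<kappa>) powr (p / q)) * r powr p = \<kappa> * s powr p"
        unfolding rp kp using kpos k0 by (simp add: field_simps)
      moreover have "1 / 2 * C * r powr p \<le> 1 / 2 * (1 / (2 * \<kappa>) powr (p / q)) * r powr p"
        using C1 rp0 by (intro mult_right_mono mult_left_mono) auto
      ultimately show ?thesis by linarith
    next
      case False
      then obtain b where bb: "\<beta> = ereal b" and bt: "b < t1" using b0 by (cases \<beta>) auto
      have bpos: "b > 0" using b0 bb by simp
      have Hb: "b * r - \<kappa> * b powr q \<le> D" using H[of b] bb bpos by simp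
      have "b powr q = b * b powr (q - 1)" using npow_mult[of b "q - 1" q] bpos q1 by simp
      also have "b powr (q - 1) \<le> t1 powr (q - 1)" using bt bpos q1 by (intro powr_mono2) auto
      also have "t1 powr (q - 1) = s"
      proof -
        have "(p - 1) * (q - 1) = 1" using cf(3) by (simp add: algebra_simps)
        then show ?thesis unfolding t1_def cf(1) using s0 by (simp add: powr_powr)
      qed
      finally have "b powr q \<le> b * s" using bpos by (simp add: mult_left_mono)
      then have "\<kappa> * b powr q \<le> \<kappa> * (b * s)" using k0 by (simp add: mult_left_mono)
      then have 1: "b * r / 2 \<le> D" using Hb rs by (simp add: algebra_simps)
      have "r powr p = r * r powr (p/q)" using npow_mult[of r "p/q" p] r cf p1 by simp
      also have "\<dots> \<le> r * \<delta> powr (p/q)" using rd r p1 q1 by (intro mult_left_mono powr_mono2) auto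
      finally have 2: "r powr p \<le> r * \<delta> powr (p/q)" .
      have dpos: "\<delta> powr (p/q) > 0" using d0 by simp
      have "1 / 2 * C * r powr p \<le> 1/2 * (b / \<delta> powr (p / q)) * r powr p"
        using C2[OF bb] rp0 by (intro mult_right_mono mult_left_mono) auto
      also have "\<dots> \<le> 1/2 * (b / \<delta> powr (p / q)) * (r * \<delta> powr (p/q))"
        using 2 bpos dpos by (intro mult_left_mono) auto
      also have "\<dots> = b * r / 2" using dpos by simp
      finally show ?thesis using 1 by linarith
    qed
  qed
  then show ?thesis unfolding C_def .
qed

theorem theorem4p1:
  fixes f :: "'a::real_normed_vector \<Rightarrow> ereal" and xbar :: 'a and p q :: real
  assumes "proper_fun f"
    and "0 \<in> subdiff f xbar"
    and "p > 1" and "q > 1" and "1 / p + 1 / q = 1"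
  shows
    "(\<forall>(\<beta>::ereal) (\<kappa>::real) (W :: ('a \<Rightarrow>\<^sub>L real) set).
        \<beta> > 0 \<and> \<kappa> > 0 \<and> W \<subseteq> ecball 0 \<beta> \<and> ecball 0 \<beta> \<subseteq> closure W \<and>
        (\<forall>\<xi>\<in>W. \<exists>x. \<xi> \<in> subdiff f x \<and> norm (x - xbar) \<le> \<kappa> * norm \<xi> powr (q / p))
      \<longrightarrow> (\<forall>\<delta>::real. \<delta> > 0 \<longrightarrow>
            (\<forall>x\<in>ecball xbar (ereal \<delta>).
               f x \<ge> f xbar + ereal (1 / 2 *
                  (case \<beta> of ereal b \<Rightarrow> min (b / \<delta> powr (p / q)) (1 / (2 * \<kappa>) powr (p / q))
                           | _ \<Rightarrow> 1 / (2 * \<kappa>) powr (p / q))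
                  * norm (x - xbar) powr p))))
     \<and>
     (\<forall>(\<alpha>::ereal) (\<kappa>::real).
        strongly_subregular (subdiff f) xbar (q / p) \<alpha> \<kappa>
      \<longrightarrow> (\<forall>x \<in> (\<lambda>z. xbar + (2 * \<kappa>) *\<^sub>R z) `
                   dual_map_inv p (closure (\<Union>y\<in>ecball xbar \<alpha>. subdiff f y)).
            f x \<ge> f xbar + ereal (1 / (2 * (2 * \<kappa>) powr (p / q)) * norm (x - xbar) powr p)))"
proof (intro conjI allI impI ballI)
  note cf = conj_facts[OF assms(3-5)]
  obtain m where fm: "f xbar = ereal m" using fxbar_fin[OF assms(1,2)] by blast
  have q0: "q > 0" using assms by simp
  {
    fix \<beta> :: ereal and \<kappa> :: real and W :: "('a \<Rightarrow>\<^sub>L real) set" and \<delta> :: real and x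
    assume A: "\<beta> > 0 \<and> \<kappa> > 0 \<and> W \<subseteq> ecball 0 \<beta> \<and> ecball 0 \<beta> \<subseteq> closure W \<and>
        (\<forall>\<xi>\<in>W. \<exists>x. \<xi> \<in> subdiff f x \<and> norm (x - xbar) \<le> \<kappa> * norm \<xi> powr (q / p))"
      and d: "\<delta> > 0" and x: "x \<in> ecball xbar (ereal \<delta>)"
    define C where "C = (case \<beta> of ereal b \<Rightarrow> min (b / \<delta> powr (p / q)) (1 / (2 * \<kappa>) powr (p / q))
                           | _ \<Rightarrow> 1 / (2 * \<kappa>) powr (p / q))"
    have "f xbar + ereal (1 / 2 * C * norm (x - xbar) powr p) \<le> f x"
    proof (cases "f x = \<infinity>")
      case True then show ?thesis using fm by simp
    next
      case False
      moreover have "f x \<noteq> -\<infinity>" using assms(1) unfolding proper_fun_def by blast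
      ultimately obtain a where fa: "f x = ereal a" by (cases "f x") auto
      define h where "h = x - xbar"
      define S where "S = {\<xi>::'a \<Rightarrow>\<^sub>L real. m + blinfun_apply \<xi> h - \<kappa> * norm \<xi> powr q \<le> a}"
      have "W \<subseteq> S"
      proof
        fix \<xi> assume "\<xi> \<in> W"
        then obtain y where "\<xi> \<in> subdiff f y" "norm (y - xbar) \<le> \<kappa> * norm \<xi> powr (q / p)" using A by blast
        from key[OF assms(1,2) this fa fm cf(2) assms(4)] A show "\<xi> \<in> S" unfolding S_def h_def by simp
      qed
      then have "closure W \<subseteq> S" unfolding S_def by (rule closure_minimal) (rule closed_S[OF q0])
      then have BS: "ecball 0 \<beta> \<subseteq> S" using A by blast
      obtain g :: "'a \<Rightarrow>\<^sub>L real" where g: "norm g \<le> 1" "blinfun_apply g h = norm h"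
        using norming_functional by blast
      have H: "t * norm h - \<kappa> * t powr q \<le> a - m" if t: "0 \<le> t" "ereal t \<le> \<beta>" for t
      proof -
        have nt: "norm (t *\<^sub>R g) \<le> t" using g t by (simp add: mult_left_le)
        then have "ereal (norm (t *\<^sub>R g - 0)) \<le> ereal t" by simp
        then have "t *\<^sub>R g \<in> ecball 0 \<beta>" unfolding ecball_def using t(2) by (blast intro: order_trans)
        then have "t *\<^sub>R g \<in> S" using BS by blast
        then have 1: "m + t * norm h - \<kappa> * norm (t *\<^sub>R g) powr q \<le> a" unfolding S_def using g by (simp add: scaleR_blinfun.rep_eq)
        have "norm (t *\<^sub>R g) powr q \<le> t powr q" using nt q0 by (intro powr_mono2) auto
        then have "\<kappa> * norm (t *\<^sub>R g) powr q \<le> \<kappa> * t powr q" using A by (simp add: mult_left_mono)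
        then show ?thesis using 1 by linarith
      qed
      have "norm h \<le> \<delta>" using x unfolding ecball_def h_def by simp
      from arith_i[OF norm_ge_zero this d _ assms(3,4,5) _ H] A
      have "1 / 2 * C * norm h powr p \<le> a - m" unfolding C_def by blast
      then show ?thesis using fm fa h_def by simp
    qed
    then show "f xbar + ereal (1 / 2 *
                  (case \<beta> of ereal b \<Rightarrow> min (b / \<delta> powr (p / q)) (1 / (2 * \<kappa>) powr (p / q))
                           | _ \<Rightarrow> 1 / (2 * \<kappa>) powr (p / q))
                  * norm (x - xbar) powr p) \<le> f x" unfolding C_def .
  }
  {
    fix \<alpha> :: ereal and \<kappa> :: real and x
    assume SR: "strongly_subregular (subdiff f) xbar (q / p) \<alpha> \<kappa>"
      and x: "x \<in> (\<lambda>z. xbar + (2 * \<kappa>) *\<^sub>R z) ` dual_map_inv p (closure (\<Union>y\<in>ecball xbar \<alpha>. subdiff f y))"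
    have k0: "\<kappa> > 0" and reg: "\<And>y. y \<in> ecball xbar \<alpha> \<Longrightarrow>
        ereal (norm (y - xbar)) \<le> ereal \<kappa> * epowr (dist0 (subdiff f) y) (q / p)"
      using SR unfolding strongly_subregular_def by auto
    obtain z where xz: "x = xbar + (2 * \<kappa>) *\<^sub>R z" and z: "z \<in> dual_map_inv p (closure (\<Union>y\<in>ecball xbar \<alpha>. subdiff f y))"
      using x by blast
    obtain \<xi> where \<xi>J: "\<xi> \<in> dual_map p z" and \<xi>C: "\<xi> \<in> closure (\<Union>y\<in>ecball xbar \<alpha>. subdiff f y)"
      using z unfolding dual_map_inv_def by blast
    have \<xi>z: "blinfun_apply \<xi> z = norm \<xi> * norm z" "norm \<xi> = norm z powr (p - 1)"
      using \<xi>J unfolding dual_map_def by auto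
    define N where "N = norm z"
    have N0: "N \<ge> 0" unfolding N_def by simp
    have kp: "(2 * \<kappa>) powr p = (2 * \<kappa>) powr (p/q) * (2 * \<kappa>)"
    proof -
      have "(2 * \<kappa>) powr (p/q) * (2 * \<kappa>) = (2 * \<kappa>) powr (p/q) * (2 * \<kappa>) powr 1" using k0 by simp
      also have "\<dots> = (2 * \<kappa>) powr (p/q + 1)" using k0 by (simp add: powr_add)
      finally show ?thesis using cf by simp
    qed
    have kpos: "(2 * \<kappa>) powr (p/q) > 0" using k0 by simp
    have target: "1 / (2 * (2 * \<kappa>) powr (p / q)) * norm (x - xbar) powr p = \<kappa> * N powr p"
    proof -
      have "norm (x - xbar) = 2 * \<kappa> * N" unfolding xz N_def using k0 by simp
      then have "norm (x - xbar) powr p = (2 * \<kappa>) powr p * N powr p" using k0 N0 by (simp add: powr_mult)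
      then show ?thesis unfolding kp using kpos k0 by (simp add: field_simps)
    qed
    have "f xbar + ereal (\<kappa> * N powr p) \<le> f x"
    proof (cases "f x = \<infinity>")
      case True then show ?thesis using fm by simp
    next
      case False
      moreover have "f x \<noteq> -\<infinity>" using assms(1) unfolding proper_fun_def by blast
      ultimately obtain a where fa: "f x = ereal a" by (cases "f x") auto
      define h where "h = x - xbar"
      define S where "S = {\<xi>::'a \<Rightarrow>\<^sub>L real. m + blinfun_apply \<xi> h - \<kappa> * norm \<xi> powr q \<le> a}"
      have "(\<Union>y\<in>ecball xbar \<alpha>. subdiff f y) \<subseteq> S"
      proof
        fix \<eta> assume "\<eta> \<in> (\<Union>y\<in>ecball xbar \<alpha>. subdiff f y)"
        then obtain y where y: "y \<in> ecball xbar \<alpha>" and \<eta>: "\<eta> \<in> subdiff f y" by blast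
        have dl: "dist0 (subdiff f) y \<le> ereal (norm \<eta>)" unfolding dist0_def using \<eta> by (rule INF_lower)
        have dg: "0 \<le> dist0 (subdiff f) y" unfolding dist0_def by (rule INF_greatest) simp
        obtain d where dd: "dist0 (subdiff f) y = ereal d" using dl dg by (cases "dist0 (subdiff f) y") auto
        have d0: "0 \<le> d" "d \<le> norm \<eta>" using dl dg dd by auto
        have "ereal (norm (y - xbar)) \<le> ereal \<kappa> * ereal (d powr (q/p))"
          using reg[OF y] dd unfolding epowr_def by simp
        then have "norm (y - xbar) \<le> \<kappa> * d powr (q/p)" by simp
        also have "\<dots> \<le> \<kappa> * norm \<eta> powr (q/p)" using d0 k0 assms(3,4)
          by (intro mult_left_mono powr_mono2) auto
        finally have "norm (y - xbar) \<le> \<kappa> * norm \<eta> powr (q/p)" .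
        from key[OF assms(1,2) \<eta> this fa fm cf(2) assms(4)] k0 show "\<eta> \<in> S" unfolding S_def h_def by simp
      qed
      then have "closure (\<Union>y\<in>ecball xbar \<alpha>. subdiff f y) \<subseteq> S" unfolding S_def
        by (rule closure_minimal) (rule closed_S[OF q0])
      with \<xi>C have "\<xi> \<in> S" by blast
      then have 1: "m + blinfun_apply \<xi> h - \<kappa> * norm \<xi> powr q \<le> a" unfolding S_def by simp
      have "blinfun_apply \<xi> h = 2 * \<kappa> * (norm \<xi> * N)" unfolding h_def xz N_def
        by (simp add: blinfun.scaleR_right \<xi>z(1))
      also have "norm \<xi> * N = N powr p" unfolding \<xi>z(2) N_def[symmetric]
        using npow_mult[of N "p - 1" p] N0 assms(3) by (simp add: mult.commute)
      finally have 2: "blinfun_apply \<xi> h = 2 * \<kappa> * N powr p" .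
      have 3: "norm \<xi> powr q = N powr p" unfolding \<xi>z(2) N_def[symmetric]
      proof -
        have "(p - 1) * q = p" using cf(3) by (simp add: algebra_simps)
        then show "(N powr (p - 1)) powr q = N powr p" using N0 by (simp add: powr_powr)
      qed
      have "\<kappa> * N powr p \<le> a - m" using 1 2 3 by simp
      then show ?thesis using fm fa by simp
    qed
    then show "f xbar + ereal (1 / (2 * (2 * \<kappa>) powr (p / q)) * norm (x - xbar) powr p) \<le> f x"
      unfolding target .
  }
qed

end
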